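(* Let $\pi_\xi(a_t\mid s_t,s_{t+k})$ be a family of conditional densities with scalar parameter $\xi$, let $p^\star(s_{t+k}\mid s_t)$ be a fixed (parameter-independent) conditional density and $p(s_t)$ a density of states, and define the marginal policy $$\pi_{\mu(\xi)}(a_t\mid s_t)=\int p^\star(s_{t+k}\mid s_t)\,\pi_\xi(a_t\mid s_t,s_{t+k})\,ds_{t+k}.$$ Let $$F_\mu=\mathbb{E}\Big[\Big(\tfrac{\partial}{\partial\xi}\ln\pi_{\mu(\xi)}(\mathbf{a}_t\mid\mathbf{s}_t)\Big)^2\Big],\qquad F_\xi=\mathbb{E}\Big[\Big(\tfrac{\partial}{\partial\xi}\ln\pi_\xi(\mathbf{a}_t\mid\mathbf{s}_t,\mathbf{s}_{t+k})\Big)^2\Big],$$ where $\mathbf{s}_t\sim p$, $\mathbf{s}_{t+k}\sim p^\star(\cdot\mid\mathbf{s}_t)$, $\mathbf{a}_t\sim\pi_\xi(\cdot\mid\mathbf{s}_t,\mathbf{s}_{t+k})$. Assume $F_\mu$ and $F_\xi$ exist and that regularity conditions permitting differentiation with respect to $\xi$ under the integral sign hold. Then $F_\xi/F_\mu\ge 1$.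
   Context: Here $\pi_{\mu(\xi)}$ is the behavior-cloning policy obtained by marginalizing the inverse dynamics policy $\pi_\xi$ over the true future-state distribution $p^\star$, so that its parameter is regarded as a function of $\xi$; $F_\mu$ and $F_\xi$ are the Fisher informations of the BC and IDM policies with respect to $\xi$. *)

theory Defs
  imports "HOL-Probability.Probability"
begin

text \<open>States live in a measure space nuS (reference measure for state densities),
actions in a measure space nuA (reference measure for action densities).
p s : density of states; pstar s s' : density of the future state s' given s;
piI xi s s' a : inverse dynamics policy density of a given (s, s').\<close>

definition marginal_policy ::
  "'s measure \<Rightarrow> ('s \<Rightarrow> 's \<Rightarrow> real) \<Rightarrow> (real \<Rightarrow> 's \<Rightarrow> 's \<Rightarrow> 'a \<Rightarrow> real) \<Rightarrow> real \<Rightarrow> 's \<Rightarrow> 'a \<Rightarrow> real"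
  where "marginal_policy nuS pstar piI xi s a = (\<integral>s'. pstar s s' * piI xi s s' a \<partial>nuS)"

definition joint_measure ::
  "'s measure \<Rightarrow> 'a measure \<Rightarrow> ('s \<Rightarrow> real) \<Rightarrow> ('s \<Rightarrow> 's \<Rightarrow> real) \<Rightarrow> (real \<Rightarrow> 's \<Rightarrow> 's \<Rightarrow> 'a \<Rightarrow> real) \<Rightarrow> real
   \<Rightarrow> ('s \<times> 's \<times> 'a) measure"
  where "joint_measure nuS nuA p pstar piI xi =
    density (nuS \<Otimes>\<^sub>M (nuS \<Otimes>\<^sub>M nuA)) (\<lambda>(s, s', a). ennreal (p s * pstar s s' * piI xi s s' a))"

definition fisher_idm where
  "fisher_idm nuS nuA p pstar piI xi =
    (\<integral>(s, s', a). (deriv (\<lambda>x. ln (piI x s s' a)) xi)\<^sup>2 \<partial>joint_measure nuS nuA p pstar piI xi)"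

definition fisher_bc where
  "fisher_bc nuS nuA p pstar piI xi =
    (\<integral>(s, s', a). (deriv (\<lambda>x. ln (marginal_policy nuS pstar piI x s a)) xi)\<^sup>2
       \<partial>joint_measure nuS nuA p pstar piI xi)"

end

theory Submission
  imports Defs
begin

lemma cs_aux:
  fixes M :: "'b measure" and w d e :: "'b \<Rightarrow> real"
  assumes w_int: "integrable M w" and w_nn: "\<And>x. x \<in> space M \<Longrightarrow> 0 \<le> w x"
    and e_nn: "\<And>x. x \<in> space M \<Longrightarrow> 0 \<le> e x"
    and e_meas: "e \<in> borel_measurable M" and d_meas: "d \<in> borel_measurable M"
    and de: "\<And>x. x \<in> space M \<Longrightarrow> (d x)^2 = w x * e x"
    and m_pos: "0 < (\<integral>x. w x \<partial>M)"
  shows "ennreal ((\<integral>x. d x \<partial>M)^2 / (\<integral>x. w x \<partial>M)) \<le> (\<integral>\<^sup>+x. ennreal (e x) \<partial>M)"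
proof (cases "(\<integral>\<^sup>+x. ennreal (e x) \<partial>M) = \<infinity>")
  case True then show ?thesis by simp
next
  case False
  have e_int: "integrable M e"
    by (rule integrableI_nonneg) (use e_meas e_nn False in \<open>auto simp: less_top\<close>)
  have eI: "(\<integral>\<^sup>+x. ennreal (e x) \<partial>M) = ennreal (\<integral>x. e x \<partial>M)"
    by (rule nn_integral_eq_integral) (use e_int e_nn in auto)
  have bnd: "norm (d x) \<le> norm ((w x + e x)/2)" if "x \<in> space M" for x
  proof -
    have eq: "((w x + e x)/2)^2 - w x * e x = ((w x - e x)/2)^2"
      by (simp add: power2_eq_square field_simps)
    have "(d x)^2 \<le> ((w x + e x)/2)^2"
      using de[OF that] eq zero_le_power2[of "(w x - e x)/2"] by linarith
    then have "\<bar>d x\<bar>^2 \<le> ((w x + e x)/2)^2" by simp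
    then have "\<bar>d x\<bar> \<le> (w x + e x)/2"
      by (rule power2_le_imp_le) (use w_nn[OF that] e_nn[OF that] in simp)
    then show ?thesis using w_nn[OF that] e_nn[OF that] by simp
  qed
  have d_int: "integrable M d"
    by (rule Bochner_Integration.integrable_bound[where f="\<lambda>x. (w x + e x)/2"]) (use w_int e_int d_meas bnd in auto)
  define m where "m = (\<integral>x. w x \<partial>M)"
  define D where "D = (\<integral>x. d x \<partial>M)"
  define I where "I = (\<integral>x. e x \<partial>M)"
  define h where "h = D / m"
  have fnn: "0 \<le> e x - 2*h*d x + h^2 * w x" if "x \<in> space M" for x
  proof (cases "w x = 0")
    case True
    then have "d x = 0" using de[OF that] by simp
    then show ?thesis using True e_nn[OF that] by simp
  next
    case False
    then have wp: "0 < w x" using w_nn[OF that] by simp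
    have "w x * (e x - 2*h*d x + h^2 * w x) = (d x - h * w x)^2"
      using de[OF that] by (simp add: power2_eq_square algebra_simps)
    then have "0 \<le> w x * (e x - 2*h*d x + h^2 * w x)" by simp
    then show ?thesis using wp by (simp add: zero_le_mult_iff)
  qed
  have "0 \<le> (\<integral>x. e x - 2*h*d x + h^2 * w x \<partial>M)"
    by (rule Bochner_Integration.integral_nonneg) (use fnn in auto)
  also have "(\<integral>x. e x - 2*h*d x + h^2 * w x \<partial>M) = I - 2*h*D + h^2*m"
    using e_int d_int w_int by (simp add: I_def D_def m_def)
  also have "\<dots> = I - D^2/m" using m_pos by (simp add: h_def m_def power2_eq_square field_simps)
  finally have "D^2/m \<le> I" by simp
  then show ?thesis unfolding eI D_def m_def I_def by (rule ennreal_leI)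
qed

theorem lemma2:
  fixes nuS :: "'s measure" and nuA :: "'a measure"
    and p :: "'s \<Rightarrow> real" and pstar :: "'s \<Rightarrow> 's \<Rightarrow> real"
    and piI :: "real \<Rightarrow> 's \<Rightarrow> 's \<Rightarrow> 'a \<Rightarrow> real"
    and dpi :: "'s \<Rightarrow> 's \<Rightarrow> 'a \<Rightarrow> real"
    and xi :: real
  assumes sfS: "sigma_finite_measure nuS" and sfA: "sigma_finite_measure nuA"
    and p_meas: "p \<in> borel_measurable nuS"
    and p_nonneg: "\<And>s. s \<in> space nuS \<Longrightarrow> 0 \<le> p s"
    and p_int: "integrable nuS p" and p_norm: "(\<integral>s. p s \<partial>nuS) = 1"
    and pstar_meas: "(\<lambda>(s, s'). pstar s s') \<in> borel_measurable (nuS \<Otimes>\<^sub>M nuS)"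
    and pstar_nonneg: "\<And>s s'. s \<in> space nuS \<Longrightarrow> s' \<in> space nuS \<Longrightarrow> 0 \<le> pstar s s'"
    and pstar_int: "\<And>s. s \<in> space nuS \<Longrightarrow> integrable nuS (pstar s)"
    and pstar_norm: "\<And>s. s \<in> space nuS \<Longrightarrow> (\<integral>s'. pstar s s' \<partial>nuS) = 1"
    and pi_meas: "\<And>x. (\<lambda>(s, s', a). piI x s s' a) \<in> borel_measurable (nuS \<Otimes>\<^sub>M (nuS \<Otimes>\<^sub>M nuA))"
    and pi_nonneg: "\<And>x s s' a. s \<in> space nuS \<Longrightarrow> s' \<in> space nuS \<Longrightarrow> a \<in> space nuA
                      \<Longrightarrow> 0 \<le> piI x s s' a"
    and pi_int: "\<And>x s s'. s \<in> space nuS \<Longrightarrow> s' \<in> space nuS \<Longrightarrow> integrable nuA (piI x s s')"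
    and pi_norm: "\<And>x s s'. s \<in> space nuS \<Longrightarrow> s' \<in> space nuS \<Longrightarrow> (\<integral>a. piI x s s' a \<partial>nuA) = 1"
    and pi_pos: "\<And>s s' a. s \<in> space nuS \<Longrightarrow> s' \<in> space nuS \<Longrightarrow> a \<in> space nuA
                      \<Longrightarrow> 0 < piI xi s s' a"
    and dpi_meas: "(\<lambda>(s, s', a). dpi s s' a) \<in> borel_measurable (nuS \<Otimes>\<^sub>M (nuS \<Otimes>\<^sub>M nuA))"
    and pi_deriv: "\<And>s s' a. s \<in> space nuS \<Longrightarrow> s' \<in> space nuS \<Longrightarrow> a \<in> space nuA
                      \<Longrightarrow> ((\<lambda>x. piI x s s' a) has_real_derivative dpi s s' a) (at xi)"
    and marg_int: "\<And>s a. s \<in> space nuS \<Longrightarrow> a \<in> space nuA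
                      \<Longrightarrow> integrable nuS (\<lambda>s'. pstar s s' * piI xi s s' a)"
    and diff_under_int: "\<And>s a. s \<in> space nuS \<Longrightarrow> a \<in> space nuA
                      \<Longrightarrow> ((\<lambda>x. marginal_policy nuS pstar piI x s a) has_real_derivative
                            (\<integral>s'. pstar s s' * dpi s s' a \<partial>nuS)) (at xi)"
    and F_xi_exists: "integrable (joint_measure nuS nuA p pstar piI xi)
                        (\<lambda>(s, s', a). (deriv (\<lambda>x. ln (piI x s s' a)) xi)\<^sup>2)"
    and F_mu_exists: "integrable (joint_measure nuS nuA p pstar piI xi)
                        (\<lambda>(s, s', a). (deriv (\<lambda>x. ln (marginal_policy nuS pstar piI x s a)) xi)\<^sup>2)"
    and F_mu_pos: "0 < fisher_bc nuS nuA p pstar piI xi"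
  shows "fisher_idm nuS nuA p pstar piI xi / fisher_bc nuS nuA p pstar piI xi \<ge> 1"
proof -
  interpret S: sigma_finite_measure nuS by (rule sfS)
  interpret A: sigma_finite_measure nuA by (rule sfA)
  interpret SA: pair_sigma_finite nuS nuA by unfold_locales
  have sfSA: "sigma_finite_measure (nuS \<Otimes>\<^sub>M nuA)"
    by (rule sigma_finite_pair_measure[OF sfS sfA])
  define N where "N = nuS \<Otimes>\<^sub>M (nuS \<Otimes>\<^sub>M nuA)"
  define q where "q = (\<lambda>(s, s', a). p s * pstar s s' * piI xi s s' a)"
  define G where "G = (\<lambda>(s::'s, s'::'s, a::'a). (deriv (\<lambda>x. ln (piI x s s' a)) xi)\<^sup>2)"
  define H where "H = (\<lambda>(s::'s, s'::'s, a::'a). (deriv (\<lambda>x. ln (marginal_policy nuS pstar piI x s a)) xi)\<^sup>2)"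
  have J: "joint_measure nuS nuA p pstar piI xi = density N (\<lambda>x. ennreal (q x))"
    unfolding joint_measure_def N_def q_def by (simp add: case_prod_beta')
  have pm1: "(\<lambda>x. p (fst x)) \<in> borel_measurable N"
    unfolding N_def using p_meas by measurable
  have pm2: "(\<lambda>x. pstar (fst x) (fst (snd x))) \<in> borel_measurable N"
  proof -
    have "(\<lambda>x. (fst x, fst (snd x))) \<in> measurable N (nuS \<Otimes>\<^sub>M nuS)"
      unfolding N_def by measurable
    from measurable_compose[OF this pstar_meas] show ?thesis by (simp add: case_prod_beta)
  qed
  have pm3: "(\<lambda>x. piI xi (fst x) (fst (snd x)) (snd (snd x))) \<in> borel_measurable N"
    using pi_meas[of xi] unfolding N_def by (simp add: case_prod_beta')
  have q_meas: "q \<in> borel_measurable N"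
    unfolding q_def case_prod_beta' using pm1 pm2 pm3 by measurable
  have bJ: "borel_measurable (joint_measure nuS nuA p pstar piI xi) = borel_measurable N"
    unfolding J by (rule measurable_cong_sets) simp_all
  have G_meas: "G \<in> borel_measurable N"
    using borel_measurable_integrable[OF F_xi_exists] bJ unfolding G_def by metis
  have H_meas: "H \<in> borel_measurable N"
    using borel_measurable_integrable[OF F_mu_exists] bJ unfolding H_def by metis
  have idm: "ennreal (fisher_idm nuS nuA p pstar piI xi) = (\<integral>\<^sup>+x. ennreal (q x) * ennreal (G x) \<partial>N)"
  proof -
    have "ennreal (fisher_idm nuS nuA p pstar piI xi) = (\<integral>\<^sup>+x. ennreal (G x) \<partial>joint_measure nuS nuA p pstar piI xi)"
      unfolding fisher_idm_def G_def[symmetric]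
      by (rule nn_integral_eq_integral[symmetric]) (rule F_xi_exists[folded G_def], rule AE_I2, simp add: G_def split: prod.splits)
    also have "\<dots> = (\<integral>\<^sup>+x. ennreal (q x) * ennreal (G x) \<partial>N)"
      unfolding J by (rule nn_integral_density) (rule measurable_compose[OF q_meas measurable_ennreal], rule measurable_compose[OF G_meas measurable_ennreal])
    finally show ?thesis .
  qed
  have bc: "ennreal (fisher_bc nuS nuA p pstar piI xi) = (\<integral>\<^sup>+x. ennreal (q x) * ennreal (H x) \<partial>N)"
  proof -
    have "ennreal (fisher_bc nuS nuA p pstar piI xi) = (\<integral>\<^sup>+x. ennreal (H x) \<partial>joint_measure nuS nuA p pstar piI xi)"
      unfolding fisher_bc_def H_def[symmetric]
      by (rule nn_integral_eq_integral[symmetric]) (rule F_mu_exists[folded H_def], rule AE_I2, simp add: H_def split: prod.splits)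
    also have "\<dots> = (\<integral>\<^sup>+x. ennreal (q x) * ennreal (H x) \<partial>N)"
      unfolding J by (rule nn_integral_density) (rule measurable_compose[OF q_meas measurable_ennreal], rule measurable_compose[OF H_meas measurable_ennreal])
    finally show ?thesis .
  qed
  have tonelli: "integral\<^sup>N N F = (\<integral>\<^sup>+s. \<integral>\<^sup>+a. \<integral>\<^sup>+s'. F (s, s', a) \<partial>nuS \<partial>nuA \<partial>nuS)"
    if F: "F \<in> borel_measurable N" for F :: "'s \<times> 's \<times> 'a \<Rightarrow> ennreal"
  proof -
    have "integral\<^sup>N N F = (\<integral>\<^sup>+s. \<integral>\<^sup>+z. F (s, z) \<partial>(nuS \<Otimes>\<^sub>M nuA) \<partial>nuS)"
      unfolding N_def by (rule sigma_finite_measure.nn_integral_fst[OF sfSA, symmetric]) (use F N_def in simp)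
    also have "\<dots> = (\<integral>\<^sup>+s. \<integral>\<^sup>+a. \<integral>\<^sup>+s'. F (s, s', a) \<partial>nuS \<partial>nuA \<partial>nuS)"
    proof (rule nn_integral_cong)
      fix s assume s: "s \<in> space nuS"
      have "(\<lambda>z. F (s, z)) \<in> borel_measurable (nuS \<Otimes>\<^sub>M nuA)"
        using measurable_Pair2[OF F[unfolded N_def] s] .
      from SA.nn_integral_snd[OF this] show "(\<integral>\<^sup>+z. F (s, z) \<partial>(nuS \<Otimes>\<^sub>M nuA)) = (\<integral>\<^sup>+a. \<integral>\<^sup>+s'. F (s, s', a) \<partial>nuS \<partial>nuA)"
        by simp
    qed
    finally show ?thesis .
  qed
  have sec: "(\<lambda>s'. f (s, s', a)) \<in> borel_measurable nuS"
    if f: "f \<in> borel_measurable N" and s: "s \<in> space nuS" and a: "a \<in> space nuA" for f :: "'s \<times> 's \<times> 'a \<Rightarrow> real" and s a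
  proof -
    have "(\<lambda>s'. (s, s', a)) \<in> measurable nuS N"
      unfolding N_def using s a by measurable
    from measurable_compose[OF this f] show ?thesis by simp
  qed
  have dpm: "(\<lambda>x. dpi (fst x) (fst (snd x)) (snd (snd x))) \<in> borel_measurable N"
    using dpi_meas unfolding N_def by (simp add: case_prod_beta')
  have key: "(\<integral>\<^sup>+s'. ennreal (q (s, s', a)) * ennreal (H (s, s', a)) \<partial>nuS)
      \<le> (\<integral>\<^sup>+s'. ennreal (q (s, s', a)) * ennreal (G (s, s', a)) \<partial>nuS)"
    if s: "s \<in> space nuS" and a: "a \<in> space nuA" for s a
  proof -
    define w where "w = (\<lambda>s'. pstar s s' * piI xi s s' a)"
    define d where "d = (\<lambda>s'. pstar s s' * dpi s s' a)"
    define e where "e = (\<lambda>s'. pstar s s' * (dpi s s' a)\<^sup>2 / piI xi s s' a)"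
    define m where "m = (\<integral>s'. w s' \<partial>nuS)"
    define D where "D = (\<integral>s'. d s' \<partial>nuS)"
    have psm: "pstar s \<in> borel_measurable nuS"
      using sec[OF pm2 s a] by simp
    have pim: "(\<lambda>s'. piI xi s s' a) \<in> borel_measurable nuS"
      using sec[OF pm3 s a] by simp
    have dpim: "(\<lambda>s'. dpi s s' a) \<in> borel_measurable nuS"
      using sec[OF dpm s a] by simp
    have w_meas: "w \<in> borel_measurable nuS" unfolding w_def using psm pim by measurable
    have d_meas: "d \<in> borel_measurable nuS" unfolding d_def using psm dpim by measurable
    have e_meas: "e \<in> borel_measurable nuS" unfolding e_def using psm pim dpim by measurable
    have w_int: "integrable nuS w" unfolding w_def by (rule marg_int[OF s a])
    have w_nn: "0 \<le> w s'" if "s' \<in> space nuS" for s'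
      unfolding w_def using pstar_nonneg[OF s that] pi_nonneg[OF s that a] by simp
    have pi_p: "0 < piI xi s s' a" if "s' \<in> space nuS" for s'
      using pi_pos[OF s that a] .
    have e_nn: "0 \<le> e s'" if "s' \<in> space nuS" for s'
      unfolding e_def using pstar_nonneg[OF s that] pi_p[OF that] by simp
    have de: "(d s')\<^sup>2 = w s' * e s'" if "s' \<in> space nuS" for s'
      unfolding d_def w_def e_def using pi_p[OF that] by (simp add: power2_eq_square field_simps)
    have m_pos: "0 < m"
    proof (rule ccontr)
      assume "\<not> 0 < m"
      moreover have "0 \<le> m" unfolding m_def by (rule Bochner_Integration.integral_nonneg) (use w_nn in auto)
      ultimately have "m = 0" by simp
      then have "AE s' in nuS. w s' = 0"
        using integral_nonneg_eq_0_iff_AE[of nuS w] w_int w_nn unfolding m_def by auto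
      with AE_space have "AE s' in nuS. pstar s s' = 0"
        by eventually_elim (metis w_def pi_p less_irrefl mult_eq_0_iff)
      then have "(\<integral>s'. pstar s s' \<partial>nuS) = (\<integral>s'. 0 \<partial>nuS)"
        by (intro integral_cong_AE) (use psm in auto)
      then show False using pstar_norm[OF s] by simp
    qed
    have marg: "marginal_policy nuS pstar piI xi s a = m"
      unfolding marginal_policy_def m_def w_def ..
    have Hv: "H (s, s', a) = (D / m)\<^sup>2" for s'
    proof -
      have "((\<lambda>x. ln (marginal_policy nuS pstar piI x s a)) has_real_derivative (1 / m) * D) (at xi)"
        using DERIV_chain2[OF DERIV_ln_divide[OF m_pos, folded marg] diff_under_int[OF s a]] marg
        by (simp add: D_def d_def)
      then show ?thesis unfolding H_def by (simp add: DERIV_imp_deriv)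
    qed
    have Gv: "G (s, s', a) = (dpi s s' a / piI xi s s' a)\<^sup>2" if "s' \<in> space nuS" for s'
    proof -
      have "((\<lambda>x. ln (piI x s s' a)) has_real_derivative (1 / piI xi s s' a) * dpi s s' a) (at xi)"
        using DERIV_chain2[OF DERIV_ln_divide[OF pi_p[OF that]] pi_deriv[OF s that a]] .
      then show ?thesis unfolding G_def by (simp add: DERIV_imp_deriv)
    qed
    have ps: "0 \<le> p s" using p_nonneg[OF s] .
    have "(\<integral>\<^sup>+s'. ennreal (q (s, s', a)) * ennreal (H (s, s', a)) \<partial>nuS)
        = (\<integral>\<^sup>+s'. ennreal (p s * (D / m)\<^sup>2) * ennreal (w s') \<partial>nuS)"
      by (rule nn_integral_cong) (use ps w_nn in \<open>simp add: Hv q_def w_def ennreal_mult'[symmetric] ac_simps\<close>)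
    also have "\<dots> = ennreal (p s * (D / m)\<^sup>2) * (\<integral>\<^sup>+s'. ennreal (w s') \<partial>nuS)"
      by (rule nn_integral_cmult) (use w_meas in measurable)
    also have "(\<integral>\<^sup>+s'. ennreal (w s') \<partial>nuS) = ennreal m"
      unfolding m_def by (rule nn_integral_eq_integral) (use w_int w_nn in auto)
    also have "ennreal (p s * (D / m)\<^sup>2) * ennreal m = ennreal (p s) * ennreal (D\<^sup>2 / m)"
      using ps m_pos by (simp add: ennreal_mult'[symmetric] power2_eq_square field_simps)
    also have "\<dots> \<le> ennreal (p s) * (\<integral>\<^sup>+s'. ennreal (e s') \<partial>nuS)"
      by (rule mult_left_mono) (use cs_aux[OF w_int w_nn e_nn e_meas d_meas de] m_pos in \<open>auto simp: D_def m_def\<close>)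
    also have "\<dots> = (\<integral>\<^sup>+s'. ennreal (p s) * ennreal (e s') \<partial>nuS)"
      by (rule nn_integral_cmult[symmetric]) (use e_meas in measurable)
    also have "\<dots> = (\<integral>\<^sup>+s'. ennreal (q (s, s', a)) * ennreal (G (s, s', a)) \<partial>nuS)"
    proof (rule nn_integral_cong)
      fix s' assume s': "s' \<in> space nuS"
      have "q (s, s', a) * G (s, s', a) = p s * e s'"
        unfolding q_def e_def Gv[OF s'] using pi_p[OF s'] by (simp add: power2_eq_square field_simps)
      moreover have "0 \<le> q (s, s', a)" unfolding q_def using ps w_nn[OF s'] by (simp add: w_def mult.assoc)
      moreover have "0 \<le> G (s, s', a)" unfolding Gv[OF s'] by simp
      ultimately show "ennreal (p s) * ennreal (e s') = ennreal (q (s, s', a)) * ennreal (G (s, s', a))"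
        using ps e_nn[OF s'] by (metis ennreal_mult)
    qed
    finally show ?thesis .
  qed
  have "ennreal (fisher_bc nuS nuA p pstar piI xi) \<le> ennreal (fisher_idm nuS nuA p pstar piI xi)"
  proof -
    have mG: "(\<lambda>x. ennreal (q x) * ennreal (G x)) \<in> borel_measurable N"
      using measurable_compose[OF q_meas measurable_ennreal] measurable_compose[OF G_meas measurable_ennreal]
      by (rule borel_measurable_times_ennreal)
    have mH: "(\<lambda>x. ennreal (q x) * ennreal (H x)) \<in> borel_measurable N"
      using measurable_compose[OF q_meas measurable_ennreal] measurable_compose[OF H_meas measurable_ennreal]
      by (rule borel_measurable_times_ennreal)
    show ?thesis
      unfolding bc idm tonelli[OF mG] tonelli[OF mH]
      by (rule nn_integral_mono, rule nn_integral_mono, erule key, assumption)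
  qed
  moreover have "0 \<le> fisher_idm nuS nuA p pstar piI xi"
    unfolding fisher_idm_def by (rule Bochner_Integration.integral_nonneg) (simp split: prod.splits)
  ultimately have "fisher_bc nuS nuA p pstar piI xi \<le> fisher_idm nuS nuA p pstar piI xi"
    using ennreal_le_iff by blast
  then show ?thesis using F_mu_pos by (simp add: le_divide_eq_1)
qed

end
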